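(* Let $(X,d)$ be a proper geodesic metric space with a distinguished base point $0$, and let $(x_n)$ be a sequence in $X$ converging to a point $\omega\in\partial_d X$ of the metric boundary. Then $(x_n)$ converges to infinity in the Gromov sense, i.e. $\lim_{n,m\to\infty}(x_n\cdot x_m)=\infty$.
   Context: A metric space is proper if closed bounded sets are compact, and geodesic if any two points $x,y$ are joined by an isometric image of $[0,d(x,y)]$. The Gromov product with respect to the base point $0$ is $(x\cdot y)=\tfrac12\big(d(x,0)+d(y,0)-d(x,y)\big)$. For $y\in X$ let $\varphi_y(x)=d(x,0)-d(x,y)$. The metric compactification $\overline{X}^d$ is the maximal ideal space of the commutative unital C*-algebra generated by the continuous functions vanishing at infinity on $X$, the constants, and the functions $\varphi_y$ ($y\in X$); the metric boundary is $\partial_d X=\overline{X}^d\setminus X$. Concretely, a sequence $(x_n)$ in $X$ converges to a point of $\partial_d X$ iff it eventually leaves every compact subset of $X$ and $\varphi_y(x_n)$ converges for every $y\in X$; two such sequences converge to the same boundary point iff the limits of $\varphi_z$ along them agree for every $z\in X$. *)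

theory Defs
  imports "HOL-Analysis.Analysis"
begin

definition proper_space :: "'a::metric_space itself \<Rightarrow> bool" where
  "proper_space _ \<longleftrightarrow> (\<forall>S::'a set. closed S \<and> bounded S \<longrightarrow> compact S)"

definition geodesic_space :: "'a::metric_space itself \<Rightarrow> bool" where
  "geodesic_space _ \<longleftrightarrow> (\<forall>x y::'a. \<exists>\<gamma>::real \<Rightarrow> 'a.
      \<gamma> 0 = x \<and> \<gamma> (dist x y) = y \<and>
      (\<forall>s\<in>{0..dist x y}. \<forall>t\<in>{0..dist x y}. dist (\<gamma> s) (\<gamma> t) = \<bar>s - t\<bar>))"

definition gromov_product :: "'a::metric_space \<Rightarrow> 'a \<Rightarrow> 'a \<Rightarrow> real" where
  "gromov_product b x y = (dist x b + dist y b - dist x y) / 2"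

definition phi :: "'a::metric_space \<Rightarrow> 'a \<Rightarrow> 'a \<Rightarrow> real" where
  "phi b y x = dist x b - dist x y"

text \<open>A sequence converges to some point of the metric boundary (concrete characterization):
  it eventually leaves every compact set, and phi_y(x_n) converges for every y.\<close>
definition converges_to_metric_boundary :: "'a::metric_space \<Rightarrow> (nat \<Rightarrow> 'a) \<Rightarrow> bool" where
  "converges_to_metric_boundary b x \<longleftrightarrow>
     (\<forall>K. compact K \<longrightarrow> (\<forall>\<^sub>F n in sequentially. x n \<notin> K)) \<and>
     (\<forall>y. convergent (\<lambda>n. phi b y (x n)))"

end

theory Submission
  imports Defs
begin

theorem mainTheorem2:
  fixes b :: "'a::metric_space" and x :: "nat \<Rightarrow> 'a"
  assumes "proper_space TYPE('a)"
    and "geodesic_space TYPE('a)"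
    and "converges_to_metric_boundary b x"
  shows "\<forall>B. \<exists>N. \<forall>n\<ge>N. \<forall>m\<ge>N. gromov_product b (x n) (x m) \<ge> B"
proof
  fix B :: real
  define R where "R = max 0 B + 1"
  define K where "K = cball b R"
  have cK: "compact K" using assms(1) unfolding proper_space_def K_def by auto
  have esc: "\<forall>\<^sub>F n in sequentially. x n \<notin> K" using assms(3) cK
    unfolding converges_to_metric_boundary_def by auto
  then obtain N1 where N1: "\<And>n. n \<ge> N1 \<Longrightarrow> x n \<notin> K" by (auto simp: eventually_sequentially)
  have cov: "K \<subseteq> (\<Union>q\<in>K. ball q (1/3))" by auto
  obtain k where kK: "k \<subseteq> K" and fk: "finite k" and kcov: "K \<subseteq> (\<Union>q\<in>k. ball q (1/3))"
    using compactE_image[OF cK _ cov] by blast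
  have "\<forall>q\<in>k. \<exists>M. \<forall>n\<ge>M. \<forall>m\<ge>M. \<bar>phi b q (x n) - phi b q (x m)\<bar> < 1/3"
  proof
    fix q assume "q \<in> k"
    have "convergent (\<lambda>n. phi b q (x n))" using assms(3) unfolding converges_to_metric_boundary_def by auto
    then have "Cauchy (\<lambda>n. phi b q (x n))" using convergent_Cauchy by blast
    then show "\<exists>M. \<forall>n\<ge>M. \<forall>m\<ge>M. \<bar>phi b q (x n) - phi b q (x m)\<bar> < 1/3"
      unfolding Cauchy_def dist_real_def by (meson divide_pos_pos zero_less_one zero_less_numeral)
  qed
  then obtain M where M: "\<And>q n m. q \<in> k \<Longrightarrow> n \<ge> M q \<Longrightarrow> m \<ge> M q \<Longrightarrow> \<bar>phi b q (x n) - phi b q (x m)\<bar> < 1/3"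
    by metis
  show "\<exists>N. \<forall>n\<ge>N. \<forall>m\<ge>N. gromov_product b (x n) (x m) \<ge> B"
  proof (intro exI allI impI)
    fix n m assume n: "n \<ge> N1 + sum M k" and m: "m \<ge> N1 + sum M k"
    have "x n \<notin> K" using N1 n by auto
    then have Rd: "R < dist b (x n)" unfolding K_def by auto
    obtain g :: "real \<Rightarrow> 'a" where g0: "g 0 = b" and g1: "g (dist b (x n)) = x n"
      and gi: "\<forall>s\<in>{0..dist b (x n)}. \<forall>t\<in>{0..dist b (x n)}. dist (g s) (g t) = \<bar>s - t\<bar>"
      using assms(2) unfolding geodesic_space_def by blast
    define p where "p = g R"
    have R0: "0 \<le> R" unfolding R_def by auto
    have "B \<le> R - 1" unfolding R_def by auto
    have dpb: "dist p b = R" using gi[rule_format, of R 0] g0 R0 Rd unfolding p_def by auto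
    have dpx: "dist p (x n) = dist b (x n) - R" using gi[rule_format, of R "dist b (x n)"] g1 R0 Rd
      unfolding p_def by auto
    have "p \<in> K" using dpb unfolding K_def by (simp add: dist_commute)
    then obtain q where q: "q \<in> k" and pq: "dist q p < 1/3" using kcov by auto
    have "M q \<le> sum M k" using q fk by (simp add: member_le_sum)
    then have c: "\<bar>phi b q (x n) - phi b q (x m)\<bar> < 1/3" using M[OF q] n m by auto
    have l1: "\<bar>phi b p z - phi b q z\<bar> \<le> dist p q" for z
      unfolding phi_def by (smt (verit) dist_commute dist_triangle)
    have ppn: "phi b p (x n) = R" unfolding phi_def using dpx by (simp add: dist_commute)
    have "phi b p (x m) > R - 1"
      using l1[of "x n"] l1[of "x m"] c ppn pq dist_commute[of p q] by linarith
    moreover have "dist (x n) (x m) \<le> dist (x n) p + dist p (x m)" by (rule dist_triangle)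
    ultimately show "gromov_product b (x n) (x m) \<ge> B"
      unfolding gromov_product_def phi_def using dpx dist_commute[of "x n" p] dist_commute[of "x m" p]
        dist_commute[of "x n" b] \<open>B \<le> R - 1\<close> by (simp add: field_simps)
  qed
qed

end
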